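(* For every $M>0$ there is a min-CICS instance $\mathbbm{I}=(\mathcal{F},\mathbb{M})$ with two MDPs $\mathbb{M}=(\mathcal{M}_1,\mathcal{M}_2)$ and the constraint $\mathcal{F}=\{\{1\},\{2\},\{1,2\}\}$ such that $\mathrm{ComGap}(\mathbbm{I})\ge M$; that is, the commitment gap of min-CICS is unbounded even for this single-selection constraint.
   Context: min-CICS: an instance $\mathbbm{I}=(\mathcal{F},\mathbb{M})$ consists of an upwards-closed family $\mathcal{F}\subseteq 2^{[n]}$ and $n$ acyclic Markov decision processes $\mathcal{M}_i$, each with a finite state set, root $\sigma_i$, actions $A_i(s)$ with nonnegative costs $c_i(a)$ and transition distributions $\Pi_i(s,a)$, and sink (terminal) states with nonnegative (possibly $+\infty$) values $v_i(t)$. A policy starts with all MDPs at their roots and repeatedly (adaptively) either advances some MDP in a non-terminal state by an action (paying its cost, random transition), or halts by selecting $S\in\mathcal{F}$ among MDPs currently in terminal states, paying $\sum_{i\in S}v_i(s_i)$. Its disutility is the expected total of action costs plus paid values; $\mathrm{OPT}(\mathbbm{I})$ is the minimum disutility over policies. A commitment $(\pi_1,\dots,\pi_n)$ assigns each state $s$ of $\mathcal{M}_i$ a distribution $\pi_i(s)$ over $A_i(s)$; a committing policy draws its action from $\pi_i(s)$ whenever it advances $\mathcal{M}_i$ at state $s$ (other choices may be adaptive). For min-CICS, $\mathrm{ComGap}(\mathbbm{I})=\inf\{\text{disutility of }\mathcal{T}:\mathcal{T}\text{ committing}\}/\mathrm{OPT}(\mathbbm{I})$. *)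

theory Defs
  imports "HOL-Probability.Probability"
begin

record mdp =
  m_states :: "nat set"
  m_root   :: nat
  m_acts   :: "nat \<Rightarrow> nat set"
  m_cost   :: "nat \<Rightarrow> real"
  m_trans  :: "nat \<Rightarrow> nat \<Rightarrow> nat pmf"
  m_val    :: "nat \<Rightarrow> ennreal"

definition terminal :: "mdp \<Rightarrow> nat \<Rightarrow> bool" where
  "terminal M s \<longleftrightarrow> m_acts M s = {}"

definition mdp_edges :: "mdp \<Rightarrow> (nat \<times> nat) set" where
  "mdp_edges M = {(s, t). s \<in> m_states M \<and> (\<exists>a \<in> m_acts M s. t \<in> set_pmf (m_trans M s a))}"

definition wf_mdp :: "mdp \<Rightarrow> bool" where
  "wf_mdp M \<longleftrightarrow> finite (m_states M) \<and> m_root M \<in> m_states M \<and>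
     (\<forall>s \<in> m_states M. finite (m_acts M s) \<and>
        (\<forall>a \<in> m_acts M s. 0 \<le> m_cost M a \<and> set_pmf (m_trans M s a) \<subseteq> m_states M)) \<and>
     acyclic (mdp_edges M)"

section \<open>min-CICS instances (MDPs indexed by 0,...,n-1)\<close>

record cics_instance =
  inst_n   :: nat
  inst_F   :: "nat set set"
  inst_M   :: "nat \<Rightarrow> mdp"

definition wf_instance :: "cics_instance \<Rightarrow> bool" where
  "wf_instance I \<longleftrightarrow>
     inst_F I \<subseteq> Pow {..<inst_n I} \<and>
     (\<forall>S \<in> inst_F I. \<forall>T. S \<subseteq> T \<and> T \<subseteq> {..<inst_n I} \<longrightarrow> T \<in> inst_F I) \<and>
     (\<forall>i < inst_n I. wf_mdp (inst_M I i))"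

text \<open>A history is the list (most recent first) of the advance events so far:
(index of advanced MDP, action taken, resulting state).\<close>

type_synonym history = "(nat \<times> nat \<times> nat) list"

fun cur :: "cics_instance \<Rightarrow> history \<Rightarrow> nat \<Rightarrow> nat" where
  "cur I [] = (\<lambda>i. m_root (inst_M I i))"
| "cur I ((i, a, s) # h) = (cur I h)(i := s)"

datatype decision = Advance nat "nat pmf" | Halt "nat set"

type_synonym policy = "history \<Rightarrow> decision"

text \<open>Expected disutility with a step budget k; infeasible moves (or running out of
budget) cost infinity.\<close>

fun dis :: "cics_instance \<Rightarrow> policy \<Rightarrow> nat \<Rightarrow> history \<Rightarrow> ennreal" where
  "dis I P 0 h = \<infinity>"
| "dis I P (Suc k) h =
     (let x = cur I h in
      case P h of
        Halt S \<Rightarrow>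
          (if S \<in> inst_F I \<and> (\<forall>i \<in> S. terminal (inst_M I i) (x i))
           then (\<Sum>i \<in> S. m_val (inst_M I i) (x i)) else \<infinity>)
      | Advance i d \<Rightarrow>
          (if i < inst_n I \<and> \<not> terminal (inst_M I i) (x i) \<and>
              set_pmf d \<subseteq> m_acts (inst_M I i) (x i)
           then (\<integral>\<^sup>+ a. (ennreal (m_cost (inst_M I i) a) +
                    (\<integral>\<^sup>+ t. dis I P k ((i, a, t) # h) \<partial>measure_pmf (m_trans (inst_M I i) (x i) a)))
                 \<partial>measure_pmf d)
           else \<infinity>))"

definition disutility :: "cics_instance \<Rightarrow> policy \<Rightarrow> ennreal" where
  "disutility I P = (INF k. dis I P k [])"

definition OPT :: "cics_instance \<Rightarrow> ennreal" where
  "OPT I = (INF P. disutility I P)"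

definition commitment :: "cics_instance \<Rightarrow> (nat \<Rightarrow> nat \<Rightarrow> nat pmf) \<Rightarrow> bool" where
  "commitment I \<pi> \<longleftrightarrow>
     (\<forall>i < inst_n I. \<forall>s \<in> m_states (inst_M I i). \<not> terminal (inst_M I i) s \<longrightarrow>
        set_pmf (\<pi> i s) \<subseteq> m_acts (inst_M I i) s)"

definition committing :: "cics_instance \<Rightarrow> policy \<Rightarrow> bool" where
  "committing I P \<longleftrightarrow> (\<exists>\<pi>. commitment I \<pi> \<and>
     (\<forall>h i d. P h = Advance i d \<longrightarrow> d = \<pi> i (cur I h i)))"

definition ComOPT :: "cics_instance \<Rightarrow> ennreal" where
  "ComOPT I = (INF P \<in> {P. committing I P}. disutility I P)"

definition ComGap :: "cics_instance \<Rightarrow> ennreal" where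
  "ComGap I = ComOPT I / OPT I"

end

theory Submission
  imports Defs
begin

definition M0 :: "real \<Rightarrow> mdp" where
  "M0 q = (| m_states = {0,1,2,3}, m_root = 0,
     m_acts = (\<lambda>s. if s = 0 then {1,2} else {}),
     m_cost = (\<lambda>_. 0),
     m_trans = (\<lambda>s a. if a = 1 then return_pmf 1 else map_pmf (\<lambda>b. if b then 3 else 2) (bernoulli_pmf q)),
     m_val = (\<lambda>s. if s = 1 then 1 else if s = 3 then \<infinity> else 0) |)"

definition M1 :: "real \<Rightarrow> mdp" where
  "M1 q = (| m_states = {0,1,2}, m_root = 0,
     m_acts = (\<lambda>s. if s = 0 then {0} else {}),
     m_cost = (\<lambda>_. 0),
     m_trans = (\<lambda>s a. map_pmf (\<lambda>b. if b then 1 else 2) (bernoulli_pmf q)),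
     m_val = (\<lambda>s. if s = 1 then \<infinity> else if s = 2 then 1 else 0) |)"

definition inst :: "real \<Rightarrow> cics_instance" where
  "inst q = (| inst_n = 2, inst_F = {{0},{1},{0,1}},
     inst_M = (\<lambda>i. if i = 0 then M0 q else M1 q) |)"

lemma pot_lb:
  fixes f :: "(nat \<Rightarrow> nat) \<Rightarrow> ennreal"
  assumes halt: "\<And>x S. S \<in> inst_F I \<Longrightarrow> (\<forall>i\<in>S. terminal (inst_M I i) (x i)) \<Longrightarrow>
                     f x \<le> (\<Sum>i\<in>S. m_val (inst_M I i) (x i))"
  and adv: "\<And>h i d. P h = Advance i d \<Longrightarrow> i < inst_n I \<Longrightarrow> \<not> terminal (inst_M I i) (cur I h i) \<Longrightarrow>
              set_pmf d \<subseteq> m_acts (inst_M I i) (cur I h i) \<Longrightarrow>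
              f (cur I h) \<le> (\<integral>\<^sup>+ a. (\<integral>\<^sup>+ t. f ((cur I h)(i := t))
                 \<partial>measure_pmf (m_trans (inst_M I i) (cur I h i) a)) \<partial>measure_pmf d)"
  shows "f (cur I h) \<le> dis I P k h"
proof (induction k arbitrary: h)
  case 0
  then show ?case by simp
next
  case (Suc k)
  show ?case
  proof (cases "P h")
    case (Halt S)
    then show ?thesis using halt[of S "cur I h"] by (simp add: Let_def)
  next
    case (Advance i d)
    show ?thesis
    proof (cases "i < inst_n I \<and> \<not> terminal (inst_M I i) (cur I h i) \<and>
              set_pmf d \<subseteq> m_acts (inst_M I i) (cur I h i)")
      case True
      have "f (cur I h) \<le> (\<integral>\<^sup>+ a. (\<integral>\<^sup>+ t. f ((cur I h)(i := t))
                 \<partial>measure_pmf (m_trans (inst_M I i) (cur I h i) a)) \<partial>measure_pmf d)"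
        using adv[OF Advance] True by blast
      also have "\<dots> \<le> (\<integral>\<^sup>+ a. (ennreal (m_cost (inst_M I i) a) +
                    (\<integral>\<^sup>+ t. dis I P k ((i, a, t) # h) \<partial>measure_pmf (m_trans (inst_M I i) (cur I h i) a)))
                 \<partial>measure_pmf d)"
      proof (rule nn_integral_mono)
        fix a
        have "(\<integral>\<^sup>+ t. f ((cur I h)(i := t)) \<partial>measure_pmf (m_trans (inst_M I i) (cur I h i) a))
              \<le> (\<integral>\<^sup>+ t. dis I P k ((i, a, t) # h) \<partial>measure_pmf (m_trans (inst_M I i) (cur I h i) a))"
          by (rule nn_integral_mono) (metis Suc.IH cur.simps(2))
        then show "(\<integral>\<^sup>+ t. f ((cur I h)(i := t)) \<partial>measure_pmf (m_trans (inst_M I i) (cur I h i) a))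
              \<le> ennreal (m_cost (inst_M I i) a) +
                    (\<integral>\<^sup>+ t. dis I P k ((i, a, t) # h) \<partial>measure_pmf (m_trans (inst_M I i) (cur I h i) a))"
          by (simp add: add_increasing)
      qed
      finally show ?thesis using True Advance by (simp add: Let_def)
    next
      case False
      then show ?thesis using Advance by (auto simp: Let_def)
    qed
  qed
qed

lemma pmf_int_lb:
  fixes G :: "nat \<Rightarrow> ennreal"
  assumes "\<And>a. a \<in> set_pmf d \<Longrightarrow> c \<le> G a"
  shows "c \<le> (\<integral>\<^sup>+ a. G a \<partial>measure_pmf d)"
proof -
  have "(\<integral>\<^sup>+ a. c \<partial>measure_pmf d) \<le> (\<integral>\<^sup>+ a. G a \<partial>measure_pmf d)"
    by (rule nn_integral_mono_AE) (simp add: AE_measure_pmf_iff assms)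
  then show ?thesis by (simp add: measure_pmf.emeasure_space_1)
qed

lemma pmf_int_point:
  fixes G :: "nat \<Rightarrow> ennreal"
  shows "ennreal (pmf d y) * G y \<le> (\<integral>\<^sup>+ a. G a \<partial>measure_pmf d)"
proof -
  have "(\<integral>\<^sup>+ a. G y * indicator {y} a \<partial>measure_pmf d) \<le> (\<integral>\<^sup>+ a. G a \<partial>measure_pmf d)"
    by (rule nn_integral_mono) (simp split: split_indicator)
  then show ?thesis by (simp add: emeasure_pmf_single mult.commute)
qed

lemma term_inst[simp]: "terminal (inst_M (inst q) i) s \<longleftrightarrow> s \<noteq> 0"
  by (simp add: terminal_def inst_def M0_def M1_def)


definition pot :: "ennreal \<Rightarrow> ennreal \<Rightarrow> (nat \<Rightarrow> nat) \<Rightarrow> ennreal" where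
  "pot c00 c01 x = (if x 0 = 0 \<and> x 1 = 0 then c00 else if x 0 = 0 \<and> x 1 = 1 then c01
     else if x 0 = 1 \<and> x 1 \<in> {0,1,2} then 1 else if x 0 = 3 \<and> x 1 \<in> {0,1} then \<infinity> else 0)"

definition potF :: "(nat \<Rightarrow> nat) \<Rightarrow> ennreal" where
  "potF x = (if x 0 \<in> {0,1} \<and> x 1 \<in> {0,1,2} then 1 else 0)"

lemma F_cases: "S \<in> inst_F (inst q) \<Longrightarrow> S = {0} \<or> S = {1} \<or> S = {0,1}"
  by (auto simp: inst_def)

lemma halt_pot:
  assumes "S \<in> inst_F (inst q)" "\<forall>i\<in>S. terminal (inst_M (inst q) i) (x i)"
  shows "pot c00 c01 x \<le> (\<Sum>i\<in>S. m_val (inst_M (inst q) i) (x i))"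
proof -
  have v0: "m_val (inst_M (inst q) 0) s = (if s = 1 then 1 else if s = 3 then \<infinity> else 0)" for s
    by (simp add: inst_def M0_def)
  have v1: "m_val (inst_M (inst q) (Suc 0)) s = (if s = 1 then \<infinity> else if s = 2 then 1 else 0)" for s
    by (simp add: inst_def M1_def)
  consider "S = {0}" | "S = {1}" | "S = {0,1}" using F_cases[OF assms(1)] by blast
  then show ?thesis
  proof cases
    case 1
    then have "x 0 \<noteq> 0" using assms(2) by simp
    then show ?thesis using 1 by (simp add: pot_def v0)
  next
    case 2
    then have "x 1 \<noteq> 0" using assms(2) by simp
    then show ?thesis using 2 by (simp add: pot_def v1)
  next
    case 3
    then have "x 0 \<noteq> 0" "x 1 \<noteq> 0" using assms(2) by simp_all
    then show ?thesis using 3 by (simp add: pot_def v0 v1)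
  qed
qed

lemma halt_potF:
  assumes "S \<in> inst_F (inst q)" "\<forall>i\<in>S. terminal (inst_M (inst q) i) (x i)"
  shows "potF x \<le> (\<Sum>i\<in>S. m_val (inst_M (inst q) i) (x i))"
proof -
  have v0: "m_val (inst_M (inst q) 0) s = (if s = 1 then 1 else if s = 3 then \<infinity> else 0)" for s
    by (simp add: inst_def M0_def)
  have v1: "m_val (inst_M (inst q) (Suc 0)) s = (if s = 1 then \<infinity> else if s = 2 then 1 else 0)" for s
    by (simp add: inst_def M1_def)
  consider "S = {0}" | "S = {1}" | "S = {0,1}" using F_cases[OF assms(1)] by blast
  then show ?thesis
  proof cases
    case 1
    then have "x 0 \<noteq> 0" using assms(2) by simp
    then show ?thesis using 1 by (simp add: potF_def v0)
  next
    case 2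
    then have "x 1 \<noteq> 0" using assms(2) by simp
    then show ?thesis using 2 by (simp add: potF_def v1)
  next
    case 3
    then have "x 0 \<noteq> 0" "x 1 \<noteq> 0" using assms(2) by simp_all
    then show ?thesis using 3 by (simp add: potF_def v0 v1)
  qed
qed

lemma trans0: "m_trans (inst_M (inst q) 0) s a = (if a = 1 then return_pmf 1 else map_pmf (\<lambda>b. if b then 3 else 2) (bernoulli_pmf q))"
  by (simp add: inst_def M0_def)
lemma trans1: "m_trans (inst_M (inst q) (Suc 0)) s a = map_pmf (\<lambda>b. if b then 1 else 2) (bernoulli_pmf q)"
  by (simp add: inst_def M1_def)
lemma acts0: "m_acts (inst_M (inst q) 0) s = (if s = 0 then {1,2} else {})"
  by (simp add: inst_def M0_def)
lemma acts1: "m_acts (inst_M (inst q) (Suc 0)) s = (if s = 0 then {0} else {})"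
  by (simp add: inst_def M1_def)

lemma ennreal_q_top: "0 < q \<Longrightarrow> ennreal q * \<top> = \<top>"
  by (simp add: ennreal_mult_top)

lemma adv_pot:
  assumes q: "0 < q" "q < 1" and i: "i < 2" "x i = 0"
    and d: "set_pmf d \<subseteq> m_acts (inst_M (inst q) i) 0"
    and c: "c00 \<le> 1" "c00 \<le> ennreal q * c01" "c01 \<le> 1 \<or> (i = 0 \<longrightarrow> 2 \<in> set_pmf d)"
  shows "pot c00 c01 x \<le> (\<integral>\<^sup>+ a. (\<integral>\<^sup>+ t. pot c00 c01 (x(i := t))
                 \<partial>measure_pmf (m_trans (inst_M (inst q) i) (x i) a)) \<partial>measure_pmf d)"
proof (cases "i = 0")
  case True
  define G where "G a = (\<integral>\<^sup>+ t. pot c00 c01 (x(0 := t)) \<partial>measure_pmf (m_trans (inst_M (inst q) 0) 0 a))" for a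
  have G1: "G 1 = pot c00 c01 (x(0 := 1))" by (simp add: G_def trans0)
  have G2: "G 2 = pot c00 c01 (x(0 := 3)) * ennreal q + pot c00 c01 (x(0 := 2)) * ennreal (1 - q)"
    using q by (simp add: G_def trans0)
  have dd: "set_pmf d \<subseteq> {1,2}" using d True by (simp add: acts0)
  have goal: "pot c00 c01 x \<le> (\<integral>\<^sup>+ a. G a \<partial>measure_pmf d)"
  proof (cases "x 1 = 0")
    case x1: True
    show ?thesis
    proof (rule pmf_int_lb)
      fix a assume "a \<in> set_pmf d"
      then have "a = 1 \<or> a = 2" using dd by auto
      moreover have "pot c00 c01 x \<le> G 1" using G1 x1 True i c by (simp add: pot_def)
      moreover have "G 2 = \<top>" using G2 x1 True q by (simp add: pot_def ennreal_mult_top mult.commute)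
      ultimately show "pot c00 c01 x \<le> G a" by auto
    qed
  next
    case x1n: False
    show ?thesis
    proof (cases "x 1 = 1")
      case x1: True
      have G2t: "G 2 = \<top>" using G2 x1 True q by (simp add: pot_def ennreal_mult_top mult.commute)
      show ?thesis
      proof (cases "c01 \<le> 1")
        case True
        show ?thesis
        proof (rule pmf_int_lb)
          fix a assume "a \<in> set_pmf d"
          then have "a = 1 \<or> a = 2" using dd by auto
          moreover have "pot c00 c01 x \<le> G 1" using G1 x1 \<open>i = 0\<close> i True by (simp add: pot_def)
          ultimately show "pot c00 c01 x \<le> G a" using G2t by auto
        qed
      next
        case False
        then have "2 \<in> set_pmf d" using c(3) \<open>i = 0\<close> by simp
        then have "0 < pmf d 2" by (simp add: pmf_positive)
        then have "ennreal (pmf d 2) * G 2 = \<top>" using G2t by (simp add: ennreal_mult_top)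
        then have "\<top> \<le> (\<integral>\<^sup>+ a. G a \<partial>measure_pmf d)" using pmf_int_point[of d 2 G] by simp
        then show ?thesis by (rule order_trans[OF top_greatest])
      qed
    next
      case False
      then have "pot c00 c01 x = 0" using x1n \<open>i = 0\<close> i by (simp add: pot_def)
      then show ?thesis by simp
    qed
  qed
  then show ?thesis using True i unfolding G_def by simp
next
  case False
  then have i1: "i = Suc 0" using i by simp
  have inner: "(\<integral>\<^sup>+ t. pot c00 c01 (x(i := t)) \<partial>measure_pmf (m_trans (inst_M (inst q) i) (x i) a))
     = pot c00 c01 (x(1 := 1)) * ennreal q + pot c00 c01 (x(1 := 2)) * ennreal (1 - q)" for a
    using q i1 by (simp add: trans1)
  have "pot c00 c01 x \<le> pot c00 c01 (x(1 := 1)) * ennreal q + pot c00 c01 (x(1 := 2)) * ennreal (1 - q)"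
  proof -
    consider "x 0 = 0" | "x 0 = 1" | "x 0 = 3" | "x 0 \<notin> {0,1,3}" by auto
    then show ?thesis
    proof cases
      case 1
      then show ?thesis using i1 i c by (simp add: pot_def mult.commute)
    next
      case 2
      then have "pot c00 c01 (x(1 := 1)) * ennreal q + pot c00 c01 (x(1 := 2)) * ennreal (1 - q)
          = ennreal q + ennreal (1 - q)" by (simp add: pot_def)
      also have "\<dots> = 1" using q by (simp add: ennreal_plus[symmetric] del: ennreal_plus)
      finally show ?thesis using 2 by (simp add: pot_def)
    next
      case 3
      then show ?thesis using q by (simp add: pot_def ennreal_mult_top mult.commute)
    next
      case 4
      then show ?thesis using i1 i by (simp add: pot_def)
    qed
  qed
  then show ?thesis using inner by (simp add: measure_pmf.emeasure_space_1)
qed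


lemma adv_potF:
  assumes q: "0 < q" "q < 1" and i: "i < 2" "x i = 0"
    and d: "set_pmf d \<subseteq> m_acts (inst_M (inst q) i) 0"
    and c: "i = 0 \<longrightarrow> 2 \<notin> set_pmf d"
  shows "potF x \<le> (\<integral>\<^sup>+ a. (\<integral>\<^sup>+ t. potF (x(i := t))
                 \<partial>measure_pmf (m_trans (inst_M (inst q) i) (x i) a)) \<partial>measure_pmf d)"
proof (cases "i = 0")
  case True
  have dd: "set_pmf d \<subseteq> {1}" using d c True by (auto simp: acts0)
  show ?thesis
  proof (rule pmf_int_lb)
    fix a assume "a \<in> set_pmf d"
    then have "a = 1" using dd by auto
    then show "potF x \<le> (\<integral>\<^sup>+ t. potF (x(i := t)) \<partial>measure_pmf (m_trans (inst_M (inst q) i) (x i) a))"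
      using True i by (simp add: trans0 potF_def)
  qed
next
  case False
  then have i1: "i = Suc 0" using i by simp
  have inner: "(\<integral>\<^sup>+ t. potF (x(i := t)) \<partial>measure_pmf (m_trans (inst_M (inst q) i) (x i) a))
     = potF (x(1 := 1)) * ennreal q + potF (x(1 := 2)) * ennreal (1 - q)" for a
    using q i1 by (simp add: trans1)
  have "potF x \<le> potF (x(1 := 1)) * ennreal q + potF (x(1 := 2)) * ennreal (1 - q)"
  proof (cases "x 0 \<in> {0,1}")
    case True
    then have "potF (x(1 := 1)) * ennreal q + potF (x(1 := 2)) * ennreal (1 - q)
          = ennreal q + ennreal (1 - q)" by (simp add: potF_def)
    also have "\<dots> = 1" using q by (simp add: ennreal_plus[symmetric] del: ennreal_plus)
    finally show ?thesis by (simp add: potF_def)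
  next
    case False
    then show ?thesis by (simp add: potF_def)
  qed
  then show ?thesis using inner by (simp add: measure_pmf.emeasure_space_1)
qed

definition Popt :: "real \<Rightarrow> policy" where
  "Popt q h = (let x = cur (inst q) h in
     if x 1 = 0 then Advance 1 (return_pmf 0)
     else if x 0 = 0 then Advance 0 (return_pmf (if x 1 = 1 then 1 else 2))
     else if x 0 = 3 then Halt {1} else Halt {0})"

lemma Popt_val:
  assumes q: "0 < q" "q < 1"
  shows "dis (inst q) (Popt q) (Suc (Suc (Suc 0))) [] \<le> ennreal (2 * q)"
  using q
proof -
  have "dis (inst q) (Popt q) (Suc (Suc (Suc 0))) [] = ennreal q + ennreal q * ennreal (1 - q)"
    using q by (simp add: Popt_def Let_def inst_def M0_def M1_def terminal_def)
  also have "\<dots> = ennreal (q + q * (1 - q))"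
    using q by (simp add: ennreal_mult[symmetric] ennreal_plus[symmetric] del: ennreal_plus)
  also have "\<dots> \<le> ennreal (2 * q)"
    using q by (intro ennreal_leI) (simp add: algebra_simps)
  finally show ?thesis .
qed


lemma cur_nil: "cur (inst q) [] = (\<lambda>i. 0)"
  by (simp add: inst_def M0_def M1_def fun_eq_iff)

lemma adv_facts:
  assumes "i < inst_n (inst q)" "\<not> terminal (inst_M (inst q) i) (cur (inst q) h i)"
    "set_pmf d \<subseteq> m_acts (inst_M (inst q) i) (cur (inst q) h i)"
  shows "i < 2" "cur (inst q) h i = 0" "set_pmf d \<subseteq> m_acts (inst_M (inst q) i) 0"
proof -
  have n: "inst_n (inst q) = 2" by (simp add: inst_def)
  show "i < 2" using assms(1) n by simp
  show c: "cur (inst q) h i = 0" using assms(2) by (simp only: term_inst) simp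
  show "set_pmf d \<subseteq> m_acts (inst_M (inst q) i) 0" using assms(3) c by simp
qed

lemma OPT_lb:
  assumes q: "0 < q" "q < 1"
  shows "ennreal q \<le> OPT (inst q)"
  unfolding OPT_def disutility_def
proof (intro INF_greatest)
  fix P k
  have "pot (ennreal q) 1 (cur (inst q) []) \<le> dis (inst q) P k []"
  proof (rule pot_lb)
    fix x S assume "S \<in> inst_F (inst q)" "\<forall>i\<in>S. terminal (inst_M (inst q) i) (x i)"
    then show "pot (ennreal q) 1 x \<le> (\<Sum>i\<in>S. m_val (inst_M (inst q) i) (x i))" by (rule halt_pot)
  next
    fix h i d
    assume a: "P h = Advance i d" "i < inst_n (inst q)" "\<not> terminal (inst_M (inst q) i) (cur (inst q) h i)"
      "set_pmf d \<subseteq> m_acts (inst_M (inst q) i) (cur (inst q) h i)"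
    note f = adv_facts[OF a(2-4)]
    show "pot (ennreal q) 1 (cur (inst q) h) \<le> (\<integral>\<^sup>+ a. (\<integral>\<^sup>+ t. pot (ennreal q) 1 ((cur (inst q) h)(i := t))
                 \<partial>measure_pmf (m_trans (inst_M (inst q) i) (cur (inst q) h i) a)) \<partial>measure_pmf d)"
      by (rule adv_pot[where x="cur (inst q) h", OF q f]) (use q in auto)
  qed
  then show "ennreal q \<le> dis (inst q) P k []" unfolding cur_nil by (simp add: pot_def)
qed

lemma Com_lb:
  assumes q: "0 < q" "q < 1" and P: "committing (inst q) P"
  shows "1 \<le> disutility (inst q) P"
proof -
  obtain \<pi> where pi: "\<And>h i d. P h = Advance i d \<Longrightarrow> d = \<pi> i (cur (inst q) h i)"
    using P unfolding committing_def by blast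
  show ?thesis
    unfolding disutility_def
  proof (intro INF_greatest)
    fix k
    show "1 \<le> dis (inst q) P k []"
    proof (cases "2 \<in> set_pmf (\<pi> 0 0)")
      case True
      have "pot 1 \<top> (cur (inst q) []) \<le> dis (inst q) P k []"
      proof (rule pot_lb)
        fix x S assume "S \<in> inst_F (inst q)" "\<forall>i\<in>S. terminal (inst_M (inst q) i) (x i)"
        then show "pot 1 \<top> x \<le> (\<Sum>i\<in>S. m_val (inst_M (inst q) i) (x i))" by (rule halt_pot)
      next
        fix h i d
        assume a: "P h = Advance i d" "i < inst_n (inst q)" "\<not> terminal (inst_M (inst q) i) (cur (inst q) h i)"
          "set_pmf d \<subseteq> m_acts (inst_M (inst q) i) (cur (inst q) h i)"
        note f = adv_facts[OF a(2-4)]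
        have "i = 0 \<longrightarrow> 2 \<in> set_pmf d" using pi[OF a(1)] f(2) True by auto
        then show "pot 1 \<top> (cur (inst q) h) \<le> (\<integral>\<^sup>+ a. (\<integral>\<^sup>+ t. pot 1 \<top> ((cur (inst q) h)(i := t))
                     \<partial>measure_pmf (m_trans (inst_M (inst q) i) (cur (inst q) h i) a)) \<partial>measure_pmf d)"
          by (intro adv_pot[where x="cur (inst q) h", OF q f]) (use q in \<open>auto simp: ennreal_mult_top\<close>)
      qed
      then show ?thesis unfolding cur_nil by (simp add: pot_def)
    next
      case False
      have "potF (cur (inst q) []) \<le> dis (inst q) P k []"
      proof (rule pot_lb)
        fix x S assume "S \<in> inst_F (inst q)" "\<forall>i\<in>S. terminal (inst_M (inst q) i) (x i)"
        then show "potF x \<le> (\<Sum>i\<in>S. m_val (inst_M (inst q) i) (x i))" by (rule halt_potF)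
      next
        fix h i d
        assume a: "P h = Advance i d" "i < inst_n (inst q)" "\<not> terminal (inst_M (inst q) i) (cur (inst q) h i)"
          "set_pmf d \<subseteq> m_acts (inst_M (inst q) i) (cur (inst q) h i)"
        note f = adv_facts[OF a(2-4)]
        have "i = 0 \<longrightarrow> 2 \<notin> set_pmf d" using pi[OF a(1)] f(2) False by auto
        then show "potF (cur (inst q) h) \<le> (\<integral>\<^sup>+ a. (\<integral>\<^sup>+ t. potF ((cur (inst q) h)(i := t))
                     \<partial>measure_pmf (m_trans (inst_M (inst q) i) (cur (inst q) h i) a)) \<partial>measure_pmf d)"
          by (rule adv_potF[where x="cur (inst q) h", OF q f])
      qed
      then show ?thesis unfolding cur_nil by (simp add: potF_def)
    qed
  qed
qed


lemma wf_inst: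
  assumes q: "0 < q" "q < 1"
  shows "wf_instance (inst q)"
proof -
  have e0: "mdp_edges (M0 q) \<subseteq> {(s, t). s < t}"
    using q by (auto simp: mdp_edges_def M0_def split: if_splits)
  have e1: "mdp_edges (M1 q) \<subseteq> {(s, t). s < t}"
    using q by (auto simp: mdp_edges_def M1_def split: if_splits)
  have wfl: "wf {(s::nat, t). s < t}"
    by (rule wf_less)
  have a0: "acyclic (mdp_edges (M0 q))" by (rule wf_acyclic[OF wf_subset[OF wfl e0]])
  have a1: "acyclic (mdp_edges (M1 q))" by (rule wf_acyclic[OF wf_subset[OF wfl e1]])
  have w0: "wf_mdp (M0 q)" using a0 q unfolding wf_mdp_def by (auto simp: M0_def)
  have w1: "wf_mdp (M1 q)" using a1 q unfolding wf_mdp_def by (auto simp: M1_def)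
  have up: "T \<in> {{0}, {1}, {0, 1}}" if "S \<in> {{0::nat}, {1}, {0, 1}}" "S \<subseteq> T" "T \<subseteq> {..<2}" for S T
  proof -
    have sub: "T \<subseteq> {0, 1}" using that(3) by auto
    have ne: "T \<noteq> {}" using that(1,2) by blast
    consider "0 \<in> T" "1 \<in> T" | "0 \<in> T" "1 \<notin> T" | "0 \<notin> T" "1 \<in> T" | "0 \<notin> T" "1 \<notin> T"
      by blast
    then show ?thesis
    proof cases
      case 1
      then have "T = {0, 1}" using sub by blast
      then show ?thesis by simp
    next
      case 2
      then have "T = {0}" using sub by blast
      then show ?thesis by simp
    next
      case 3
      then have "T = {1}" using sub by blast
      then show ?thesis by simp
    next
      case 4
      then show ?thesis using sub ne by blast
    qed
  qed
  show ?thesis unfolding wf_instance_def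
    using w0 w1 up by (auto simp: inst_def)
qed

theorem theorem6:
  fixes M :: real
  assumes "M > 0"
  shows "\<exists>I. wf_instance I \<and> inst_n I = 2 \<and> inst_F I = {{0}, {1}, {0, 1}} \<and>
             0 < OPT I \<and> OPT I < \<infinity> \<and> ennreal M \<le> ComGap I"
proof -
  define q where "q = 1 / (2 * M + 2)"
  have q: "0 < q" "q < 1" using assms by (simp_all add: q_def)
  have q2: "2 * q = 1 / (M + 1)" using assms by (simp add: q_def field_simps)
  have ub: "OPT (inst q) \<le> ennreal (2 * q)"
  proof -
    have "OPT (inst q) \<le> disutility (inst q) (Popt q)" unfolding OPT_def by (rule INF_lower) simp
    also have "\<dots> \<le> dis (inst q) (Popt q) (Suc (Suc (Suc 0))) []" unfolding disutility_def by (rule INF_lower) simp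
    also have "\<dots> \<le> ennreal (2 * q)" by (rule Popt_val[OF q])
    finally show ?thesis .
  qed
  have lb: "ennreal q \<le> OPT (inst q)" by (rule OPT_lb[OF q])
  have com: "1 \<le> ComOPT (inst q)"
    unfolding ComOPT_def by (rule INF_greatest) (use Com_lb[OF q] in auto)
  obtain r where r: "OPT (inst q) = ennreal r" "0 \<le> r"
    using ub by (cases "OPT (inst q)" rule: ennreal_cases) (auto simp: top_unique)
  have rq: "q \<le> r" "r \<le> 2 * q" using lb ub r q by (simp_all add: ennreal_le_iff)
  have rpos: "0 < r" using rq q by simp
  have "ennreal M \<le> ennreal (1 / r)"
  proof (rule ennreal_leI)
    have "1 / (2 * q) \<le> 1 / r" using rq rpos by (intro divide_left_mono) auto
    then show "M \<le> 1 / r" using q2 assms by simp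
  qed
  also have "\<dots> = 1 / OPT (inst q)" using r rpos by (simp add: divide_ennreal[symmetric])
  also have "\<dots> \<le> ComOPT (inst q) / OPT (inst q)" by (rule divide_right_mono_ennreal[OF com])
  finally have gap: "ennreal M \<le> ComGap (inst q)" unfolding ComGap_def .
  show ?thesis
    apply (rule exI[of _ "inst q"])
    using wf_inst[OF q] gap lb ub r rpos q
    by (auto simp: inst_def)
qed

end
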